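(* Let $\theta:\mathbb{R}\to\mathbb{R}$ be continuously differentiable and strictly increasing, let $\tau,h_i,v^n>0$, set $\lambda=\tau v^n/h_i$, and write $\Theta_j^m=\theta(Q_j^m)$. Let $\bar w\in[0,1]$, $\Psi_{\mathrm{prev}}\in[0,2]$, $\tilde C>0$, and let $$\Psi(r)=\max\big\{0,\ \min\{(2\tilde C+\Psi_{\mathrm{prev}})\,r,\ 1-\bar w+\bar w r,\ 2\}\big\}.$$ Suppose real numbers $Q_i^n,Q_i^{n-1},Q_{i-1}^n,Q_{i-1}^{n+1}$ satisfy $$\Theta_i^n + \tfrac12\Psi(r_i^n)(\Theta_{i-1}^{n+1}-\Theta_i^n) + \lambda Q_i^n = \Theta_i^{n-1} + \tfrac12\Psi_{\mathrm{prev}}(\Theta_{i-1}^n-\Theta_i^{n-1}) + \lambda Q_{i-1}^n,\qquad r_i^n=\frac{\Theta_{i-1}^n-\Theta_i^{n-1}}{\Theta_{i-1}^{n+1}-\Theta_i^n},$$ (with the term $\Psi(r_i^n)(\Theta_{i-1}^{n+1}-\Theta_i^n)$ set to $0$ when $\Theta_{i-1}^{n+1}=\Theta_i^n$), and suppose $\tilde C\le C_i^n$, where $$C_i^n=\frac{Q_i^n-Q_{i-1}^n}{\Theta_i^n-\Theta_{i-1}^n}\,\lambda \ \text{ if } Q_i^n\ne Q_{i-1}^n,\qquad C_i^n=\frac{\lambda}{\theta'(Q_i^n)}\ \text{ if } Q_i^n=Q_{i-1}^n$$ (for instance $\tilde C=\lambda/M$ if $\theta'\le M$ on the relevant range). Then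 $$\min\{Q_i^{n-1},Q_{i-1}^n\}\le Q_i^n\le \max\{Q_i^{n-1},Q_{i-1}^n\}.$$
   Context: This is the high-resolution compact inverse scheme for the nonlinear advection equation with retardation $\partial_t\theta(q)+v(t)\partial_xq=0$ (e.g. $\theta(q)=\kappa q$ plus a nonlinear sorption term), in conservative form $h_i\Theta_i^{n+1/2}+\tau v^nQ_i^n=h_i\Theta_i^{n-1/2}+\tau v^nQ_{i-1}^n$ with $\Theta_i^{n+1/2}=\Theta_i^n+\frac12\Psi(r_i^n)(\Theta_{i-1}^{n+1}-\Theta_i^n)$; $C_i^n$ is the nonlinear local Courant number, $\Psi_{\mathrm{prev}}=\Psi(r_i^{n-1})$ the limiter value from the previous time level, $Q_i^n\approx q(x_i,t^n)$. *)

theory Defs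
  imports "HOL-Analysis.Analysis" "HOL-Library.Extended_Real"
begin

definition limiter :: "real \<Rightarrow> real \<Rightarrow> real \<Rightarrow> real \<Rightarrow> real" where
  "limiter Ct Psiprev w r = max 0 (min ((2 * Ct + Psiprev) * r) (min (1 - w + w * r) 2))"

text \<open>Nonlinear local Courant number C_i^n, given Q_i^n (q) and Q_(i-1)^n (qm).
  In the case q = qm the value lambda / theta'(q) is read as +infinity when theta'(q) = 0.\<close>
definition courant :: "(real \<Rightarrow> real) \<Rightarrow> real \<Rightarrow> real \<Rightarrow> real \<Rightarrow> ereal" where
  "courant \<theta> lam q qm =
     (if q \<noteq> qm then ereal ((q - qm) / (\<theta> q - \<theta> qm) * lam)
      else if deriv \<theta> q = 0 then \<infinity> else ereal (lam / deriv \<theta> q))"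

end

theory Submission
  imports Defs
begin

theorem mainTheorem6:
  fixes \<theta> :: "real \<Rightarrow> real"
    and tau h v lam w Psiprev Ct :: real
    and Qi_n Qi_prev Qim_n Qim_next :: real
  assumes C1: "\<theta> C1_differentiable_on UNIV"
    and mono: "strict_mono \<theta>"
    and tau: "tau > 0" and h: "h > 0" and v: "v > 0"
    and lam: "lam = tau * v / h"
    and w: "0 \<le> w" "w \<le> 1"
    and Psiprev: "0 \<le> Psiprev" "Psiprev \<le> 2"
    and Ct: "Ct > 0"
    and scheme: "\<theta> Qi_n
        + 1/2 * (if \<theta> Qim_next = \<theta> Qi_n then 0
                 else limiter Ct Psiprev w
                        ((\<theta> Qim_n - \<theta> Qi_prev) / (\<theta> Qim_next - \<theta> Qi_n))
                      * (\<theta> Qim_next - \<theta> Qi_n))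
        + lam * Qi_n
      = \<theta> Qi_prev + 1/2 * Psiprev * (\<theta> Qim_n - \<theta> Qi_prev) + lam * Qim_n"
    and CFL: "ereal Ct \<le> courant \<theta> lam Qi_n Qim_n"
  shows "min Qi_prev Qim_n \<le> Qi_n \<and> Qi_n \<le> max Qi_prev Qim_n"
proof (cases "Qi_n = Qim_n")
  case True
  then show ?thesis by auto
next
  case False
  define a where "a = \<theta> Qi_prev"
  define b where "b = \<theta> Qim_n"
  define x where "x = \<theta> Qi_n"
  define y where "y = \<theta> Qim_next"
  have le_iff: "\<And>u v. \<theta> u \<le> \<theta> v \<longleftrightarrow> u \<le> v"
    using mono by (simp add: strict_mono_less_eq)
  have xb: "x \<noteq> b" unfolding x_def b_def using False mono
    by (metis strict_mono_eq)
  define C where "C = (Qi_n - Qim_n) / (x - b) * lam"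
  have CC: "Ct \<le> C" using CFL False unfolding courant_def C_def x_def b_def by simp
  have lamC: "lam * (Qi_n - Qim_n) = C * (x - b)" unfolding C_def using xb by (simp add: field_simps)
  define P where "P = (if y = x then 0 else limiter Ct Psiprev w ((b - a) / (y - x)) * (y - x))"
  have sch: "x + 1/2 * P + lam * Qi_n = a + 1/2 * Psiprev * (b - a) + lam * Qim_n"
    using scheme unfolding P_def a_def b_def x_def y_def by simp
  have key: "\<exists>\<mu>. P = \<mu> * (b - a) \<and> 0 \<le> \<mu> \<and> \<mu> \<le> 2 * Ct + Psiprev"
  proof (cases "y = x")
    case True then show ?thesis unfolding P_def using Ct Psiprev by (intro exI[of _ 0]) auto
  next
    case yx: False
    define r where "r = (b - a) / (y - x)"
    have Pr: "P = limiter Ct Psiprev w r * (y - x)" unfolding P_def r_def using yx by simp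
    have rD: "r * (y - x) = b - a" unfolding r_def using yx by simp
    show ?thesis
    proof (cases "r \<le> 0")
      case True
      have "(2 * Ct + Psiprev) * r \<le> 0" using True Ct Psiprev by (simp add: mult_nonneg_nonpos)
      then have "limiter Ct Psiprev w r = 0" unfolding limiter_def by linarith
      then show ?thesis using Pr Ct Psiprev by (intro exI[of _ 0]) auto
    next
      case rpos: False
      define L where "L = limiter Ct Psiprev w r"
      have L0: "0 \<le> L" unfolding L_def limiter_def by simp
      have L1: "L \<le> (2 * Ct + Psiprev) * r" unfolding L_def limiter_def using Ct Psiprev rpos
        by (simp add: mult_nonneg_nonneg)
      have "P = (L / r) * (b - a)" using Pr rD rpos unfolding L_def
        by (metis (no_types, lifting) ab_semigroup_mult_class.mult_ac(1) less_irrefl nonzero_eq_divide_eq not_le times_divide_eq_left)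
      moreover have "0 \<le> L / r" using L0 rpos by simp
      moreover have "L / r \<le> 2 * Ct + Psiprev" using L1 rpos by (simp add: divide_le_eq)
      ultimately show ?thesis by blast
    qed
  qed
  then obtain \<mu> where mu: "P = \<mu> * (b - a)" "0 \<le> \<mu>" "\<mu> \<le> 2 * Ct + Psiprev" by blast
  define k where "k = (Psiprev - \<mu>) / 2"
  have eq: "(1 + C) * (x - a) = (C + k) * (b - a)"
    using sch lamC mu(1) unfolding k_def by (simp add: algebra_simps field_simps)
  have Cpos: "C > 0" using CC Ct by simp
  have k1: "C + k \<ge> 0" using CC mu unfolding k_def by (simp add: field_simps)
  have k2: "1 - k \<ge> 0" using Psiprev mu unfolding k_def by (simp add: field_simps)
  have eq2: "(1 + C) * (b - x) = (1 - k) * (b - a)" using eq by (simp add: algebra_simps)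
  have "min a b \<le> x \<and> x \<le> max a b"
  proof (cases "a \<le> b")
    case True
    have "(1 + C) * (x - a) \<ge> 0" using eq k1 True by simp
    then have "x - a \<ge> 0" using Cpos by (simp add: zero_le_mult_iff)
    moreover have "(1 + C) * (b - x) \<ge> 0" using eq2 k2 True by simp
    then have "b - x \<ge> 0" using Cpos by (simp add: zero_le_mult_iff)
    ultimately show ?thesis using True by simp
  next
    case False
    have "(1 + C) * (x - a) \<le> 0" using eq k1 False by (simp add: mult_nonneg_nonpos)
    then have "x - a \<le> 0" using Cpos by (simp add: mult_le_0_iff)
    moreover have "(1 + C) * (b - x) \<le> 0" using eq2 k2 False by (simp add: mult_nonneg_nonpos)
    then have "b - x \<le> 0" using Cpos by (simp add: mult_le_0_iff)
    ultimately show ?thesis using False by simp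
  qed
  then show ?thesis unfolding a_def b_def x_def using le_iff
    by (smt (verit) min_def max_def)
qed

end
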